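(* Let $G$ be a simple connected graph and let $v$ be a real eigenvector of $\mathcal M$ with $\mathcal Mv=\mu v$, $\mu>0$. Let $S=\{i: v_i\ge0\}$ and let $\theta\in[0,\pi/2)$ be the angle between $|v|=(|v_1|,\dots,|v_n|)^{\mathsf T}$ and $\delta$, i.e. $\cos\theta=\delta^{\mathsf T}|v|/(\|v\|_2\|\delta\|_2)$. If $$\mu+1>4\,\frac{\mathrm{vol}\, S\,\mathrm{vol}\, \bar S}{(\mathrm{vol}\, V)^2}\,\frac{1}{\cos^2\theta},$$ then $Q(S)>0$.
   Context: $G=(V,E)$ is a finite, undirected, unweighted, simple connected graph with adjacency matrix $A$, degrees $d_i$, $D=\mathrm{Diag}(d_i)$, $\delta=(\sqrt{d_1},\dots,\sqrt{d_n})^{\mathsf T}$, $\mathrm{vol}\, S=\sum_{i\in S}d_i$, $\bar S=V\setminus S$, $\mathbb 1_S$ the characteristic vector of $S$. $\mathcal M=D^{-1/2}AD^{-1/2}-\frac{1}{\mathrm{vol}\, V}\delta\delta^{\mathsf T}$. The modularity of $S$ is $Q(S)=\mathbb 1_S^{\mathsf T}A\mathbb 1_S-(\mathrm{vol}\, S)^2/\mathrm{vol}\, V$. *)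

theory Defs
  imports "HOL-Analysis.Analysis"
begin

definition simple_graph :: "('n \<Rightarrow> 'n \<Rightarrow> bool) \<Rightarrow> bool" where
  "simple_graph E \<longleftrightarrow> (\<forall>i j. E i j \<longrightarrow> E j i) \<and> (\<forall>i. \<not> E i i)"

definition graph_connected :: "('n \<Rightarrow> 'n \<Rightarrow> bool) \<Rightarrow> bool" where
  "graph_connected E \<longleftrightarrow> (\<forall>i j. E\<^sup>*\<^sup>* i j)"

definition adj_matrix :: "('n::finite \<Rightarrow> 'n \<Rightarrow> bool) \<Rightarrow> real^'n^'n" where
  "adj_matrix E = (\<chi> i j. if E i j then 1 else 0)"

definition deg :: "('n::finite \<Rightarrow> 'n \<Rightarrow> bool) \<Rightarrow> 'n \<Rightarrow> real" where
  "deg E i = real (card {j. E i j})"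

definition vol :: "('n::finite \<Rightarrow> 'n \<Rightarrow> bool) \<Rightarrow> 'n set \<Rightarrow> real" where
  "vol E S = (\<Sum>i\<in>S. deg E i)"

definition delta_vec :: "('n::finite \<Rightarrow> 'n \<Rightarrow> bool) \<Rightarrow> real^'n" where
  "delta_vec E = (\<chi> i. sqrt (deg E i))"

definition modularity_matrix :: "('n::finite \<Rightarrow> 'n \<Rightarrow> bool) \<Rightarrow> real^'n^'n" where
  "modularity_matrix E = (\<chi> i j. adj_matrix E $ i $ j / (sqrt (deg E i) * sqrt (deg E j))
      - (delta_vec E $ i * delta_vec E $ j) / vol E UNIV)"

definition indicator_vec :: "'n::finite set \<Rightarrow> real^'n" where
  "indicator_vec S = (\<chi> i. if i \<in> S then 1 else 0)"

definition modularity :: "('n::finite \<Rightarrow> 'n \<Rightarrow> bool) \<Rightarrow> 'n set \<Rightarrow> real" where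
  "modularity E S = indicator_vec S \<bullet> (adj_matrix E *v indicator_vec S) - (vol E S)^2 / vol E UNIV"

definition abs_vec :: "real^'n \<Rightarrow> real^'n" where
  "abs_vec v = (\<chi> i. \<bar>v $ i\<bar>)"

end

theory Submission
  imports Defs
begin

theorem theorem5p2:
  fixes E :: "'n::finite \<Rightarrow> 'n \<Rightarrow> bool" and v :: "real^'n" and \<mu> :: real and \<theta> :: real
  assumes "simple_graph E" and "graph_connected E"
    and "v \<noteq> 0" and "modularity_matrix E *v v = \<mu> *\<^sub>R v" and "\<mu> > 0"
    and "\<theta> \<in> {0..<pi/2}"
    and "cos \<theta> = (delta_vec E \<bullet> abs_vec v) / (norm v * norm (delta_vec E))"
    and "\<mu> + 1 > 4 * (vol E {i. v $ i \<ge> 0} * vol E (- {i. v $ i \<ge> 0}) / (vol E UNIV)^2)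
                    * (1 / (cos \<theta>)^2)"
  shows "modularity E {i. v $ i \<ge> 0} > 0"
proof -
  let ?S = "{i. v $ i \<ge> 0}"
  define d where "d i = deg E i" for i
  define s where "s i = sqrt (d i)" for i
  define a where "a i j = adj_matrix E $ i $ j" for i j
  define N where "N i j = a i j / (s i * s j)" for i j
  define V where "V = vol E UNIV"
  define L where "L z i = (\<Sum>j\<in>UNIV. N i j * z j)" for z :: "'n \<Rightarrow> real" and i
  define x where "x i = v $ i" for i
  have sg: "simple_graph E" by fact
  have asym: "a i j = a j i" for i j
    using sg unfolding a_def simple_graph_def adj_matrix_def by auto
  have a01: "a i j = 0 \<or> a i j = 1" for i j
    unfolding a_def adj_matrix_def by auto
  have dsum: "d i = (\<Sum>j\<in>UNIV. a i j)" for i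
    unfolding d_def a_def deg_def adj_matrix_def by (simp add: sum.If_cases)
  have apos: "a i j \<noteq> 0 \<Longrightarrow> d j > 0" for i j
    using sg unfolding simple_graph_def a_def adj_matrix_def d_def deg_def
    by (auto simp: card_gt_0_iff split: if_splits)
  have d0: "d i \<ge> 0" for i by (simp add: d_def deg_def)
  have ss: "s i * s i = d i" for i using d0[of i] by (simp add: s_def)
  have Nsym: "N i j = N j i" for i j unfolding N_def using asym[of i j] by (simp add: mult.commute)
  have Vdef: "V = (\<Sum>i\<in>UNIV. d i)" by (simp add: V_def vol_def d_def)
  have Mij: "modularity_matrix E $ i $ j = N i j - s i * s j / V" for i j
    by (simp add: modularity_matrix_def N_def a_def s_def d_def V_def delta_vec_def)
  have eig: "(\<Sum>j\<in>UNIV. (N i j - s i * s j / V) * x j) = \<mu> * x i" for i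
  proof -
    have "(modularity_matrix E *v v) $ i = (\<mu> *\<^sub>R v) $ i" using assms(4) by simp
    then show ?thesis by (simp add: matrix_vector_mult_def Mij x_def)
  qed
  have Vpos: "V > 0"
  proof (rule ccontr)
    assume nV: "\<not> V > 0"
    have "V \<ge> 0" unfolding Vdef using d0 by (simp add: sum_nonneg)
    hence V0: "V = 0" using nV by simp
    have dz: "d i = 0" for i
      using V0 unfolding Vdef using sum_nonneg_eq_0_iff[of UNIV d] d0 by simp
    have "x i = 0" for i
    proof -
      have "(\<Sum>j\<in>UNIV. (N i j - s i * s j / V) * x j) = 0"
        by (simp add: V0 N_def s_def dz)
      then show ?thesis using eig[of i] assms(5) by simp
    qed
    hence "v = 0" by (simp add: vec_eq_iff x_def)
    thus False using assms(3) by simp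
  qed
  have Ls: "L s i = s i" for i
  proof -
    have "N i j * s j = a i j / s i" for j
    proof (cases "a i j = 0")
      case True then show ?thesis by (simp add: N_def)
    next
      case False
      then have "d j > 0" using apos by blast
      then have "s j > 0" by (simp add: s_def)
      then show ?thesis by (simp add: N_def)
    qed
    hence "L s i = d i / s i" unfolding L_def dsum by (simp add: sum_divide_distrib)
    also have "\<dots> = s i"
    proof (cases "s i = 0")
      case True then show ?thesis by simp
    next
      case False then show ?thesis using ss[of i] by (simp add: field_simps)
    qed
    finally show ?thesis .
  qed
  have Lsym: "(\<Sum>i\<in>UNIV. y i * L z i) = (\<Sum>i\<in>UNIV. z i * L y i)" for y z
    unfolding L_def sum_distrib_left by (subst sum.swap) (simp add: Nsym mult_ac)
  have Llin: "L (\<lambda>i. y i - t * z i) i = L y i - t * L z i" for y z t i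
    unfolding L_def by (simp add: algebra_simps sum_subtractf sum_distrib_left)
  have ann: "a i j \<ge> 0" for i j using a01[of i j] by auto
  have psd: "(\<Sum>i\<in>UNIV. w i * L w i) + (\<Sum>i\<in>UNIV. w i * w i) \<ge> 0" for w
  proof -
    define z where "z i = w i / s i" for i
    have e1: "(\<Sum>i\<in>UNIV. \<Sum>j\<in>UNIV. a i j * z i ^ 2) \<le> (\<Sum>i\<in>UNIV. w i * w i)"
    proof -
      have "(\<Sum>i\<in>UNIV. \<Sum>j\<in>UNIV. a i j * z i ^ 2) = (\<Sum>i\<in>UNIV. d i * z i ^ 2)"
        by (simp add: dsum sum_distrib_right)
      also have "\<dots> \<le> (\<Sum>i\<in>UNIV. w i * w i)"
      proof (rule sum_mono)
        fix i show "d i * z i ^ 2 \<le> w i * w i"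
        proof (cases "d i = 0")
          case True then show ?thesis by simp
        next
          case False then have "s i \<noteq> 0" using ss[of i] by auto
          then show ?thesis using ss[of i] by (simp add: z_def power2_eq_square field_simps)
        qed
      qed
      finally show ?thesis .
    qed
    have e2: "(\<Sum>i\<in>UNIV. \<Sum>j\<in>UNIV. a i j * z j ^ 2) = (\<Sum>i\<in>UNIV. \<Sum>j\<in>UNIV. a i j * z i ^ 2)"
      by (subst sum.swap) (simp add: asym)
    have e3: "(\<Sum>i\<in>UNIV. \<Sum>j\<in>UNIV. a i j * z i * z j) = (\<Sum>i\<in>UNIV. w i * L w i)"
      unfolding L_def sum_distrib_left by (intro sum.cong refl) (simp add: z_def N_def mult_ac)
    have "0 \<le> (\<Sum>i\<in>UNIV. \<Sum>j\<in>UNIV. a i j * (z i + z j)^2)"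
      using ann by (intro sum_nonneg) simp
    also have "\<dots> = (\<Sum>i\<in>UNIV. \<Sum>j\<in>UNIV. a i j * z i ^ 2) + (\<Sum>i\<in>UNIV. \<Sum>j\<in>UNIV. a i j * z j ^ 2)
        + 2 * (\<Sum>i\<in>UNIV. \<Sum>j\<in>UNIV. a i j * z i * z j)"
      by (simp add: power2_eq_square algebra_simps sum.distrib sum_distrib_left)
    finally show ?thesis using e1 e2 e3 by linarith
  qed
  have eig2: "L x i - s i * (\<Sum>j\<in>UNIV. s j * x j) / V = \<mu> * x i" for i
  proof -
    have "(\<Sum>j\<in>UNIV. (N i j - s i * s j / V) * x j) = L x i - s i * (\<Sum>j\<in>UNIV. s j * x j) / V"
    proof -
      have "(\<Sum>j\<in>UNIV. (N i j - s i * s j / V) * x j) = (\<Sum>j\<in>UNIV. N i j * x j - s i * (s j * x j) / V)"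
        by (intro sum.cong refl) (simp add: algebra_simps)
      also have "\<dots> = (\<Sum>j\<in>UNIV. N i j * x j) - (\<Sum>j\<in>UNIV. s i * (s j * x j) / V)"
        by (rule sum_subtractf)
      also have "(\<Sum>j\<in>UNIV. s i * (s j * x j) / V) = s i * (\<Sum>j\<in>UNIV. s j * x j) / V"
        by (simp add: sum_divide_distrib[symmetric] sum_distrib_left[symmetric])
      finally show ?thesis unfolding L_def .
    qed
    then show ?thesis using eig[of i] by simp
  qed
  have sv0: "(\<Sum>i\<in>UNIV. s i * x i) = 0"
  proof -
    define P where "P = (\<Sum>i\<in>UNIV. s i * x i)"
    have "\<mu> * P = (\<Sum>i\<in>UNIV. s i * (\<mu> * x i))" unfolding P_def by (simp add: sum_distrib_left mult_ac)
    also have "\<dots> = (\<Sum>i\<in>UNIV. s i * L x i - s i * s i * P / V)"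
      using eig2 unfolding P_def by (intro sum.cong refl) (simp add: algebra_simps)
    also have "\<dots> = (\<Sum>i\<in>UNIV. s i * L x i) - (\<Sum>i\<in>UNIV. s i * s i) * P / V"
      by (simp add: sum_subtractf sum_divide_distrib sum_distrib_right)
    also have "(\<Sum>i\<in>UNIV. s i * L x i) = P"
      using Lsym[of s x] Ls unfolding P_def by (simp add: mult_ac)
    also have "(\<Sum>i\<in>UNIV. s i * s i) = V" using ss Vdef by simp
    finally have "\<mu> * P = 0" using Vpos by simp
    thus ?thesis using assms(5) P_def by simp
  qed
  have Lx: "L x i = \<mu> * x i" for i using eig2[of i] sv0 by simp
  define y where "y i = (if i \<in> ?S then s i else 0)" for i
  define c where "c = vol E ?S / V"
  define u where "u i = y i - c * s i" for i
  have yy: "y i * y i = y i * s i" for i by (simp add: y_def)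
  have volS: "vol E ?S = (\<Sum>i\<in>UNIV. y i * s i)"
  proof -
    have "(\<Sum>i\<in>UNIV. y i * s i) = (\<Sum>i\<in>UNIV. if i \<in> ?S then d i else 0)"
      by (intro sum.cong refl) (simp add: y_def ss)
    also have "\<dots> = sum d ?S" by (simp add: sum.If_cases)
    finally show ?thesis by (simp add: vol_def d_def)
  qed
  have ys: "(\<Sum>i\<in>UNIV. s i * L y i) = vol E ?S"
    using Lsym[of s y] Ls volS by (simp add: mult_ac)
  have sss: "(\<Sum>i\<in>UNIV. s i * s i) = V" using ss Vdef by simp
  have Lu: "L u i = L y i - c * s i" for i
    unfolding u_def Llin Ls by simp
  have Q1: "indicator_vec ?S \<bullet> (adj_matrix E *v indicator_vec ?S) = (\<Sum>i\<in>UNIV. y i * L y i)"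
  proof -
    have "y i * (N i j * y j) = indicator_vec ?S $ i * (adj_matrix E $ i $ j * indicator_vec ?S $ j)" for i j
    proof (cases "a i j = 0")
      case True then show ?thesis by (simp add: N_def a_def)
    next
      case False
      then have "d j > 0" "d i > 0" using apos asym by metis+
      then have "s j > 0" "s i > 0" by (simp_all add: s_def)
      then show ?thesis by (simp add: N_def a_def y_def indicator_vec_def)
    qed
    then show ?thesis
      by (simp add: inner_vec_def matrix_vector_mult_def L_def sum_distrib_left)
  qed
  have Q: "modularity E ?S = (\<Sum>i\<in>UNIV. u i * L u i)"
  proof -
    have "(\<Sum>i\<in>UNIV. u i * L u i) = (\<Sum>i\<in>UNIV. y i * L y i) - c * (\<Sum>i\<in>UNIV. y i * s i)
        - c * (\<Sum>i\<in>UNIV. s i * L y i) + c^2 * (\<Sum>i\<in>UNIV. s i * s i)"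
      by (simp add: Lu u_def algebra_simps sum.distrib sum_subtractf sum_distrib_left power2_eq_square)
    also have "\<dots> = (\<Sum>i\<in>UNIV. y i * L y i) - (vol E ?S)^2 / V"
      unfolding ys sss volS[symmetric] c_def using Vpos by (simp add: power2_eq_square field_simps)
    finally show ?thesis unfolding modularity_def Q1 V_def by simp
  qed
  have uu: "(\<Sum>i\<in>UNIV. u i * u i) = vol E ?S - (vol E ?S)^2 / V"
  proof -
    have "(\<Sum>i\<in>UNIV. u i * u i) = (\<Sum>i\<in>UNIV. y i * y i) - 2 * c * (\<Sum>i\<in>UNIV. y i * s i)
        + c^2 * (\<Sum>i\<in>UNIV. s i * s i)"
      by (simp add: u_def algebra_simps sum.distrib sum_subtractf sum_distrib_left power2_eq_square)
    also have "\<dots> = vol E ?S - (vol E ?S)^2 / V"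
      unfolding yy sss volS[symmetric] c_def using Vpos by (simp add: power2_eq_square field_simps)
    finally show ?thesis .
  qed
  have ux: "(\<Sum>i\<in>UNIV. u i * x i) = (\<Sum>i\<in>UNIV. y i * x i)"
  proof -
    have "(\<Sum>i\<in>UNIV. u i * x i) = (\<Sum>i\<in>UNIV. y i * x i) - c * (\<Sum>i\<in>UNIV. s i * x i)"
      by (simp add: u_def algebra_simps sum_subtractf sum_distrib_left)
    then show ?thesis using sv0 by simp
  qed
  have xx: "(\<Sum>i\<in>UNIV. x i * x i) > 0"
  proof -
    obtain k where "x k \<noteq> 0" using assms(3) by (auto simp: vec_eq_iff x_def)
    have "(\<Sum>i\<in>UNIV. x i * x i) \<noteq> 0"
    proof
      assume "(\<Sum>i\<in>UNIV. x i * x i) = 0"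
      then have "\<forall>i\<in>UNIV. x i * x i = 0" using sum_nonneg_eq_0_iff[of UNIV "\<lambda>i. x i * x i"] by simp
      then show False using \<open>x k \<noteq> 0\<close> by simp
    qed
    moreover have "(\<Sum>i\<in>UNIV. x i * x i) \<ge> 0" by (simp add: sum_nonneg)
    ultimately show ?thesis by linarith
  qed
  have key: "(\<Sum>i\<in>UNIV. u i * L u i) + (\<Sum>i\<in>UNIV. u i * u i) \<ge>
     (\<mu> + 1) * (\<Sum>i\<in>UNIV. u i * x i)^2 / (\<Sum>i\<in>UNIV. x i * x i)"
  proof -
    define A where "A = (\<Sum>i\<in>UNIV. u i * x i)"
    define X where "X = (\<Sum>i\<in>UNIV. x i * x i)"
    define t where "t = A / X"
    define w where "w i = u i - t * x i" for i
    have Lw: "L w i = L u i - t * (\<mu> * x i)" for i unfolding w_def Llin Lx by simp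
    have xLu: "(\<Sum>i\<in>UNIV. x i * L u i) = \<mu> * A"
      using Lsym[of x u] unfolding Lx A_def by (simp add: sum_distrib_left mult_ac)
    have "(\<Sum>i\<in>UNIV. w i * L w i) = (\<Sum>i\<in>UNIV. u i * L u i) - t * \<mu> * (\<Sum>i\<in>UNIV. u i * x i)
          - t * (\<Sum>i\<in>UNIV. x i * L u i) + t^2 * \<mu> * (\<Sum>i\<in>UNIV. x i * x i)"
      by (simp add: Lw w_def algebra_simps sum.distrib sum_subtractf sum_distrib_left power2_eq_square)
    also have "\<dots> = (\<Sum>i\<in>UNIV. u i * L u i) - 2 * t * \<mu> * A + t^2 * \<mu> * X"
      unfolding xLu A_def X_def by simp
    finally have wLw: "(\<Sum>i\<in>UNIV. w i * L w i) = (\<Sum>i\<in>UNIV. u i * L u i) - 2 * t * \<mu> * A + t^2 * \<mu> * X" .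
    have ww: "(\<Sum>i\<in>UNIV. w i * w i) = (\<Sum>i\<in>UNIV. u i * u i) - 2 * t * A + t^2 * X"
      unfolding A_def X_def
      by (simp add: w_def algebra_simps sum.distrib sum_subtractf sum_distrib_left power2_eq_square)
    have "X > 0" using xx X_def by simp
    have "(\<mu> + 1) * (2 * t * A - t^2 * X) = (\<mu> + 1) * A^2 / X"
      using \<open>X > 0\<close> unfolding t_def by (simp add: field_simps power2_eq_square)
    then show ?thesis using psd[of w] wLw ww unfolding A_def[symmetric] X_def[symmetric]
      by (simp add: algebra_simps)
  qed
  have absd: "delta_vec E \<bullet> abs_vec v = 2 * (\<Sum>i\<in>UNIV. y i * x i)"
  proof -
    have "delta_vec E \<bullet> abs_vec v = (\<Sum>i\<in>UNIV. 2 * (y i * x i) - s i * x i)"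
      unfolding inner_vec_def
      by (intro sum.cong refl) (auto simp: delta_vec_def abs_vec_def s_def d_def y_def x_def)
    also have "\<dots> = 2 * (\<Sum>i\<in>UNIV. y i * x i)"
      using sv0 by (simp add: sum_subtractf sum_distrib_left)
    finally show ?thesis .
  qed
  have nv: "norm v = sqrt (\<Sum>i\<in>UNIV. x i * x i)"
    by (simp add: norm_eq_sqrt_inner inner_vec_def x_def)
  have nd: "norm (delta_vec E) = sqrt V"
    using sss by (simp add: norm_eq_sqrt_inner inner_vec_def delta_vec_def s_def d_def)
  have vSb: "vol E (- ?S) = V - vol E ?S"
    unfolding V_def vol_def Compl_eq_Diff_UNIV by (simp add: sum_diff)
  show ?thesis
  proof -
    define P where "P = (\<Sum>i\<in>UNIV. y i * x i)"
    define X where "X = (\<Sum>i\<in>UNIV. x i * x i)"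
    define a0 where "a0 = vol E ?S"
    have Xp: "X > 0" using xx X_def by simp
    have cpos: "cos \<theta> > 0" using assms(6) by (intro cos_gt_zero_pi) auto
    have cdef: "cos \<theta> = 2 * P / (sqrt X * sqrt V)"
      using assms(7) absd nv nd unfolding P_def X_def by simp
    have sXV: "sqrt X * sqrt V > 0" using Xp Vpos by simp
    have Ppos: "P > 0" using cpos sXV unfolding cdef by (simp add: zero_less_divide_iff)
    have c2: "(cos \<theta>)^2 = 4 * P^2 / (X * V)"
      unfolding cdef using Xp Vpos by (simp add: power_divide power_mult_distrib real_sqrt_mult[symmetric])
    have e: "4 * (a0 * (V - a0) / V^2) * (1 / (4 * P^2 / (X * V))) = a0 * (V - a0) * X / (V * P^2)"
      using Vpos Ppos Xp by (simp add: field_simps power2_eq_square)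
    have h: "\<mu> + 1 > a0 * (V - a0) * X / (V * P^2)"
      using assms(8) unfolding vSb c2 a0_def[symmetric] V_def[symmetric] e .
    have "(\<mu> + 1) * (P^2 / X) > a0 * (V - a0) * X / (V * P^2) * (P^2 / X)"
      using h Ppos Xp by (intro mult_strict_right_mono) auto
    also have "a0 * (V - a0) * X / (V * P^2) * (P^2 / X) = a0 - a0^2 / V"
      using Vpos Ppos Xp by (simp add: field_simps power2_eq_square)
    finally have "(\<mu> + 1) * P^2 / X > a0 - a0^2 / V" by simp
    moreover have "(\<mu> + 1) * (\<Sum>i\<in>UNIV. u i * x i)^2 / X = (\<mu> + 1) * P^2 / X"
      using ux P_def by simp
    ultimately show ?thesis using key Q uu unfolding a0_def[symmetric] P_def[symmetric] X_def[symmetric]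
      by linarith
  qed
qed
end
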